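(* Let $A>0$, $\lambda>0$, $\xi=\sqrt{1-8\lambda}$ (principal branch), and let $(\mathfrak{M}_n)_{n\ge0}$ be defined by $\mathfrak{M}_0=1$ and $\big(\frac{n(n-1)}{2}+\lambda\big)\mathfrak{M}_n+n\mathfrak{M}_{n-1}=\lambda A^n$ for $n\in\mathbb{N}$. Then for every $n\in\mathbb{N}\cup\{0\}$, $$\mathfrak{M}_n=\frac{(-2)^n\,n!}{\big(\tfrac12+\tfrac{\xi}{2}\big)_n\big(\tfrac12-\tfrac{\xi}{2}\big)_n}\sum_{k=0}^{n}\Big(-\tfrac12+\tfrac{\xi}{2}\Big)_k\Big(-\tfrac12-\tfrac{\xi}{2}\Big)_k\frac{1}{k!}\Big(-\frac{A}{2}\Big)^k .$$ In particular $\mathfrak{M}_1=A-1/\lambda$.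
   Context: Pochhammer symbol: $(z)_0=1$, $(z)_n=z(z+1)\cdots(z+n-1)$ for $n\in\mathbb{N}$. The principal branch convention means $\xi\in[0,1)$ if $\lambda\le1/8$ and $\xi$ is purely imaginary if $\lambda>1/8$. *)

theory Defs
  imports "HOL-Analysis.Analysis"
begin

end

theory Submission
  imports Defs
begin

lemma P_real:
  fixes xi :: complex and lam :: real
  assumes "xi^2 = of_real (1 - 8*lam)"
  shows "pochhammer (1/2+xi/2) n * pochhammer (1/2-xi/2) n
         = of_real (\<Prod>j<n. real j^2 + real j + 2*lam)"
proof (induction n)
  case 0 then show ?case by simp
next
  case (Suc n)
  have e: "(1/2+xi/2 + of_nat n) * (1/2-xi/2 + of_nat n) = of_real (real n^2 + real n + 2*lam)"
  proof -
    have "(1/2+xi/2 + of_nat n) * (1/2-xi/2 + of_nat n) = 1/4 - xi^2/4 + of_nat n + of_nat n ^2"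
      by (simp add: algebra_simps power2_eq_square)
    also have "\<dots> = of_real (real n^2 + real n + 2*lam)" using assms by (simp add: field_simps)
    finally show ?thesis .
  qed
  have "pochhammer (1/2+xi/2) (Suc n) * pochhammer (1/2-xi/2) (Suc n)
     = (pochhammer (1/2+xi/2) n * pochhammer (1/2-xi/2) n) *
       ((1/2+xi/2 + of_nat n) * (1/2-xi/2 + of_nat n))"
    by (simp add: pochhammer_Suc algebra_simps)
  also have "\<dots> = of_real (\<Prod>j<Suc n. real j^2 + real j + 2*lam)"
    using Suc e by simp
  finally show ?case .
qed

lemma Q_shift:
  fixes xi :: complex and lam :: real
  assumes "xi^2 = of_real (1 - 8*lam)"
  shows "pochhammer (-1/2+xi/2) (Suc n) * pochhammer (-1/2-xi/2) (Suc n)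
       = 2 * of_real lam * (pochhammer (1/2+xi/2) n * pochhammer (1/2-xi/2) n)"
proof -
  have 1: "-1/2+xi/2 + 1 = 1/2+xi/2" "-1/2-xi/2 + 1 = 1/2-xi/2" by simp_all
  have 2: "(-1/2+xi/2) * (-1/2-xi/2) = 2 * of_real lam"
  proof -
    have "(-1/2+xi/2) * (-1/2-xi/2) = 1/4 - xi^2/4" by (simp add: algebra_simps power2_eq_square)
    then show ?thesis using assms by (simp add: field_simps)
  qed
  have "pochhammer (-1/2+xi/2) (Suc n) * pochhammer (-1/2-xi/2) (Suc n)
     = ((-1/2+xi/2) * (-1/2-xi/2)) * (pochhammer (1/2+xi/2) n * pochhammer (1/2-xi/2) n)"
    unfolding pochhammer_rec 1 by (simp only: ac_simps)
  then show ?thesis unfolding 2 .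
qed

lemma prod_pos: "(lam::real) > 0 \<Longrightarrow> (\<Prod>j<n. real j^2 + real j + 2*lam) > 0"
  by (rule prod_pos) (auto intro: add_nonneg_pos)

theorem mainTheorem2:
  fixes A lam :: real and M :: "nat \<Rightarrow> real" and \<xi> :: complex
  assumes "A > 0" and "lam > 0"
    and "\<xi> = csqrt (complex_of_real (1 - 8 * lam))"
    and "M 0 = 1"
    and "\<And>n. n \<ge> 1 \<Longrightarrow>
           (real n * (real n - 1) / 2 + lam) * M n + real n * M (n - 1) = lam * A ^ n"
  shows "(\<forall>n. complex_of_real (M n) =
            ((-2) ^ n * fact n /
              (pochhammer (1/2 + \<xi>/2) n * pochhammer (1/2 - \<xi>/2) n)) *
            (\<Sum>k=0..n. pochhammer (-1/2 + \<xi>/2) k * pochhammer (-1/2 - \<xi>/2) k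
                        * (1 / fact k) * (complex_of_real (- A / 2)) ^ k))
         \<and> M 1 = A - 1 / lam"
proof -
  have xi2: "\<xi>^2 = of_real (1 - 8*lam)" using assms(3) by simp
  define P where "P n = pochhammer (1/2 + \<xi>/2) n * pochhammer (1/2 - \<xi>/2) n" for n
  define S where "S n = (\<Sum>k=0..n. pochhammer (-1/2 + \<xi>/2) k * pochhammer (-1/2 - \<xi>/2) k
                        * (1 / fact k) * (complex_of_real (- A / 2)) ^ k)" for n
  define R where "R n = ((-2) ^ n * fact n / P n) * S n" for n
  define d where "d n = real n^2 + real n + 2*lam" for n
  have Pr: "P n = of_real (\<Prod>j<n. d j)" for n unfolding P_def d_def using P_real[OF xi2] .
  have Pnz: "P n \<noteq> 0" for n unfolding Pr d_def using prod_pos[OF assms(2)] by (metis less_irrefl of_real_eq_0_iff)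
  have dpos: "d n > 0" for n unfolding d_def using assms(2) by (simp add: add_nonneg_pos)
  have PS: "P (Suc n) = P n * of_real (d n)" for n unfolding Pr by simp
  have SS: "S (Suc n) = S n + 2 * of_real lam * P n / fact (Suc n) * (of_real (-A/2))^(Suc n)" for n
    unfolding S_def P_def using Q_shift[OF xi2, of n] by (simp add: sum.atLeast0_atMost_Suc)
  have rec: "of_real (real (Suc n) * real n / 2 + lam) * R (Suc n) + of_real (real (Suc n)) * R n
      = of_real (lam * A ^ Suc n)" for n
  proof -
    have c: "real (Suc n) * real n / 2 + lam = d n / 2" unfolding d_def by (simp add: algebra_simps power2_eq_square)
    have dnz: "complex_of_real (d n) \<noteq> 0" using dpos[of n] by simp
    have f: "fact (Suc n) = of_nat (Suc n) * (fact n :: complex)" by simp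
    define x where "x = complex_of_real (-A/2)"
    define c' where "c' = (-2)^n * fact n / P n"
    have pw: "(-2::complex)^n * x^n = of_real A ^ n"
      unfolding x_def by (simp add: power_mult_distrib[symmetric])
    have R1: "R n = c' * S n" unfolding R_def c'_def by simp
    have R2: "of_real (d n / 2) * R (Suc n) = - of_nat (Suc n) * c' * S (Suc n)"
      unfolding R_def c'_def PS f using Pnz[of n] dnz by (simp add: field_simps)
    have S2: "S (Suc n) - S n = 2 * of_real lam * P n / (of_nat (Suc n) * fact n) * x * x^n"
      unfolding SS x_def f by simp
    have "of_real (d n / 2) * R (Suc n) + of_real (real (Suc n)) * R n
        = - of_nat (Suc n) * c' * (S (Suc n) - S n)" unfolding R1 R2 by (simp add: algebra_simps)
    also have "\<dots> = - 2 * of_real lam * ((-2)^n * x^n) * x"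
      unfolding S2 c'_def using Pnz[of n] by (simp add: field_simps del: of_nat_Suc)
    also have "\<dots> = of_real (lam * A ^ Suc n)" unfolding pw by (simp add: x_def)
    finally show ?thesis unfolding c .
  qed
  have main: "complex_of_real (M n) = R n" for n
  proof (induction n)
    case 0 then show ?case using assms(4) by (simp add: R_def S_def P_def)
  next
    case (Suc n)
    have h: "(real (Suc n) * real n / 2 + lam) * M (Suc n) + real (Suc n) * M n = lam * A ^ Suc n"
      using assms(5)[of "Suc n"] by simp
    have cpos: "real (Suc n) * real n / 2 + lam > 0" using assms(2) by (simp add: add_nonneg_pos)
    have "of_real (real (Suc n) * real n / 2 + lam) * complex_of_real (M (Suc n))
        = of_real (real (Suc n) * real n / 2 + lam) * R (Suc n)"
    proof -
      have h2: "of_real (real (Suc n) * real n / 2 + lam) * complex_of_real (M (Suc n))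
           + of_real (real (Suc n)) * R n = of_real (lam * A ^ Suc n)"
        using arg_cong[OF h, of complex_of_real] Suc by (simp only: of_real_add of_real_mult)
      show ?thesis using h2 rec[of n] by (metis add_right_cancel)
    qed
    moreover have "complex_of_real (real (Suc n) * real n / 2 + lam) \<noteq> 0"
      using cpos by (metis less_irrefl of_real_eq_0_iff)
    ultimately show ?case by (metis mult_cancel_left)
  qed
  have M1: "M 1 = A - 1/lam"
  proof -
    have "(0 + lam) * M 1 + 1 * M 0 = lam * A" using assms(5)[of 1] by simp
    then show ?thesis using assms(2,4) by (simp add: field_simps)
  qed
  show ?thesis using main M1 unfolding R_def S_def P_def by simp
qed

end
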